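(* Let $\alpha,\beta,\gamma$ be partitions with $\alpha_1\le 2$ and let $\Gamma$ be an LR-tableau of type $(\alpha,\beta,\gamma)$; let $x$ be the number of entries $1$ in $\Gamma$. Assume: (1) the number of entries $2$ in $\Gamma$ equals $x$ or $x-1$; (2) every row of $\Gamma$ contains at most one (non-empty) box; (3) if row $j$ contains an entry $2$ and row $i$ contains an entry $1$, then $j>i$. Then in the poset $(\mathcal D_\Gamma,\le_{\rm arc})$ all saturated chains have the same length.
   Context: For a partition $\lambda$, $\lambda'$ is its conjugate; the diagram of $\lambda$ is drawn with $\lambda'_i$ boxes in row $i$, so the $i$-th row of $\beta\setminus\gamma$ consists of the boxes in columns $\gamma'_i+1,\dots,\beta'_i$. With $\alpha_1\le2$, $\alpha'=(\alpha'_1,\alpha'_2)$. An LR-tableau of type $(\alpha,\beta,\gamma)$ is a filling of $\beta\setminus\gamma$ with $\alpha'_1$ entries $1$ and $\alpha'_2$ entries $2$, weakly increasing along rows, strictly increasing down columns, such that for each $c\ge0$ the number of entries $1$ in columns to the right of column $c$ is at least the number of entries $2$ there. Place positive integers on a line in decreasing order from left to right. An arc is a pair $(m,n)$, $m>n$ positive integers (source $m$, target $n$); a pole at $n$ is regarded as an arc $(\infty,n)$. An arc diagram of type $(\alpha,\beta,\gamma)$ is a finite multiset of $\alpha'_2$ arcs and $\alpha'_1-\alpha'_2$ poles with, for each $i$, exactly $\beta'_i-\gamma'_i$ members having source or target $i$. It has LR type $\Gamma$ if for each $i$ the number of arcs with source $i$ equals the number of entries $2$ in row $i$ of $\Gamma$;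 $\mathcal D_\Gamma$ is the set of such diagrams. Moves: for $a>b>c>d$, (A) replaces arcs $(a,c),(b,d)$ by $(a,d),(b,c)$; (C) replaces them by $(a,b),(c,d)$; for $a>b>c$, (B) replaces arc $(a,c)$ and pole $(\infty,b)$ by arc $(a,b)$ and pole $(\infty,c)$; (D) replaces them by arc $(b,c)$ and pole $(\infty,a)$. $\Delta\le_{\rm arc}\Delta'$ iff $\Delta$ is obtained from $\Delta'$ by a finite (possibly empty) sequence of moves. A chain is saturated if it has no refinement, i.e. is not properly contained in another chain of the poset. *)

theory Defs
  imports Main "HOL-Library.Multiset" "HOL-Library.Extended_Nat"
begin

text \<open>A partition is a weakly decreasing list of positive integers.
  Parts are indexed from 1; parts beyond the length are 0.\<close>

definition is_partition :: "nat list \<Rightarrow> bool" where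
  "is_partition xs \<longleftrightarrow> sorted_wrt (\<ge>) xs \<and> 0 \<notin> set xs"

definition part :: "nat list \<Rightarrow> nat \<Rightarrow> nat" where
  "part xs i = (if 1 \<le> i \<and> i \<le> length xs then xs ! (i - 1) else 0)"

definition conj :: "nat list \<Rightarrow> nat \<Rightarrow> nat" where
  "conj xs i = length (filter (\<lambda>x. i \<le> x) xs)"

text \<open>Boxes of beta minus gamma: row i (i \<ge> 1) consists of the boxes in columns
  conj gamma i + 1, ..., conj beta i.  A box is a pair (row, column).\<close>
definition skew_boxes :: "nat list \<Rightarrow> nat list \<Rightarrow> (nat \<times> nat) set" where
  "skew_boxes \<beta> \<gamma> = {(i, c). 1 \<le> i \<and> conj \<gamma> i < c \<and> c \<le> conj \<beta> i}"

definition row_boxes :: "nat list \<Rightarrow> nat list \<Rightarrow> nat \<Rightarrow> (nat \<times> nat) set" where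
  "row_boxes \<beta> \<gamma> i = {b \<in> skew_boxes \<beta> \<gamma>. fst b = i}"

definition entries_in_row :: "nat list \<Rightarrow> nat list \<Rightarrow> (nat \<times> nat \<Rightarrow> nat) \<Rightarrow> nat \<Rightarrow> nat \<Rightarrow> nat" where
  "entries_in_row \<beta> \<gamma> T k i = card {b \<in> row_boxes \<beta> \<gamma> i. T b = k}"

definition num_entries :: "nat list \<Rightarrow> nat list \<Rightarrow> (nat \<times> nat \<Rightarrow> nat) \<Rightarrow> nat \<Rightarrow> nat" where
  "num_entries \<beta> \<gamma> T k = card {b \<in> skew_boxes \<beta> \<gamma>. T b = k}"

definition LR_tableau ::
  "nat list \<Rightarrow> nat list \<Rightarrow> nat list \<Rightarrow> (nat \<times> nat \<Rightarrow> nat) \<Rightarrow> bool" where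
  "LR_tableau \<alpha> \<beta> \<gamma> T \<longleftrightarrow>
     (\<forall>i\<ge>1. conj \<gamma> i \<le> conj \<beta> i) \<and>
     (\<forall>b \<in> skew_boxes \<beta> \<gamma>. T b \<in> {1, 2}) \<and>
     num_entries \<beta> \<gamma> T 1 = conj \<alpha> 1 \<and>
     num_entries \<beta> \<gamma> T 2 = conj \<alpha> 2 \<and>
     (\<forall>i c c'. (i, c) \<in> skew_boxes \<beta> \<gamma> \<longrightarrow> (i, c') \<in> skew_boxes \<beta> \<gamma> \<longrightarrow> c < c'
        \<longrightarrow> T (i, c) \<le> T (i, c')) \<and>
     (\<forall>i i' c. (i, c) \<in> skew_boxes \<beta> \<gamma> \<longrightarrow> (i', c) \<in> skew_boxes \<beta> \<gamma> \<longrightarrow> i < i'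
        \<longrightarrow> T (i, c) < T (i', c)) \<and>
     (\<forall>c. card {b \<in> skew_boxes \<beta> \<gamma>. c < snd b \<and> T b = 2}
          \<le> card {b \<in> skew_boxes \<beta> \<gamma>. c < snd b \<and> T b = 1})"

text \<open>An arc is a pair (source, target) with source > target \<ge> 1; a pole at n is
  the arc (\<infinity>, n).  Sources are extended naturals.\<close>
type_synonym arc = "enat \<times> nat"

definition valid_arc :: "arc \<Rightarrow> bool" where
  "valid_arc a \<longleftrightarrow> 1 \<le> snd a \<and> enat (snd a) < fst a"

definition is_pole :: "arc \<Rightarrow> bool" where
  "is_pole a \<longleftrightarrow> fst a = \<infinity>"

definition arc_diagram :: "nat list \<Rightarrow> nat list \<Rightarrow> nat list \<Rightarrow> arc multiset \<Rightarrow> bool" where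
  "arc_diagram \<alpha> \<beta> \<gamma> D \<longleftrightarrow>
     (\<forall>a \<in># D. valid_arc a) \<and>
     size (filter_mset (\<lambda>a. \<not> is_pole a) D) = conj \<alpha> 2 \<and>
     size (filter_mset is_pole D) = conj \<alpha> 1 - conj \<alpha> 2 \<and>
     (\<forall>i\<ge>1. size (filter_mset (\<lambda>a. fst a = enat i \<or> snd a = i) D) = conj \<beta> i - conj \<gamma> i)"

definition has_LR_type :: "nat list \<Rightarrow> nat list \<Rightarrow> (nat \<times> nat \<Rightarrow> nat) \<Rightarrow> arc multiset \<Rightarrow> bool" where
  "has_LR_type \<beta> \<gamma> T D \<longleftrightarrow>
     (\<forall>i\<ge>1. size (filter_mset (\<lambda>a. fst a = enat i) D) = entries_in_row \<beta> \<gamma> T 2 i)"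

definition D_Gamma :: "nat list \<Rightarrow> nat list \<Rightarrow> nat list \<Rightarrow> (nat \<times> nat \<Rightarrow> nat) \<Rightarrow> arc multiset set" where
  "D_Gamma \<alpha> \<beta> \<gamma> T = {D. arc_diagram \<alpha> \<beta> \<gamma> D \<and> has_LR_type \<beta> \<gamma> T D}"

text \<open>arc_move D D': D' is obtained from D by one of the moves (A)-(D).\<close>
definition arc_move :: "arc multiset \<Rightarrow> arc multiset \<Rightarrow> bool" where
  "arc_move D D' \<longleftrightarrow>
     (\<exists>a b c d :: nat. a > b \<and> b > c \<and> c > d \<and>
        {#(enat a, c), (enat b, d)#} \<subseteq># D \<and>
        (D' = D - {#(enat a, c), (enat b, d)#} + {#(enat a, d), (enat b, c)#} \<or>
         D' = D - {#(enat a, c), (enat b, d)#} + {#(enat a, b), (enat c, d)#})) \<or>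
     (\<exists>a b c :: nat. a > b \<and> b > c \<and>
        {#(enat a, c), (\<infinity>, b)#} \<subseteq># D \<and>
        (D' = D - {#(enat a, c), (\<infinity>, b)#} + {#(enat a, b), (\<infinity>, c)#} \<or>
         D' = D - {#(enat a, c), (\<infinity>, b)#} + {#(enat b, c), (\<infinity>, a)#}))"

definition arc_le :: "arc multiset \<Rightarrow> arc multiset \<Rightarrow> bool" where
  "arc_le D D' \<longleftrightarrow> arc_move\<^sup>*\<^sup>* D' D"

definition is_chain_in :: "arc multiset set \<Rightarrow> arc multiset set \<Rightarrow> bool" where
  "is_chain_in P C \<longleftrightarrow> C \<subseteq> P \<and> (\<forall>x \<in> C. \<forall>y \<in> C. arc_le x y \<or> arc_le y x)"

definition saturated_chain_in :: "arc multiset set \<Rightarrow> arc multiset set \<Rightarrow> bool" where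
  "saturated_chain_in P C \<longleftrightarrow> is_chain_in P C \<and> \<not> (\<exists>C'. is_chain_in P C' \<and> C \<subset> C')"

definition chain_length :: "arc multiset set \<Rightarrow> nat" where
  "chain_length C = card C - 1"

end

theory Submission
  imports Defs
begin



lemma size_filter_image:
  "size (filter_mset (\<lambda>a. Q (f a)) M) = count (image_mset f M) s"
  if "\<And>a. Q a \<longleftrightarrow> a = s" for Q
  using that by (induction M) auto

lemma count_image_size: "count (image_mset f M) s = size (filter_mset (\<lambda>a. f a = s) M)"
  by (induction M) auto

lemma size_filter_image_gen:
  "size (filter_mset (\<lambda>a. Q (f a)) M) = size (filter_mset Q (image_mset f M))"
  by (induction M) auto

lemma size_filter_or:
  assumes "\<forall>a\<in>#M. \<not> (P a \<and> Q a)"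
  shows "size (filter_mset (\<lambda>a. P a \<or> Q a) M) = size (filter_mset P M) + size (filter_mset Q M)"
  using assms by (induction M) auto

definition g :: "arc \<Rightarrow> arc \<Rightarrow> nat" where
  "g x y = (if fst y < fst x \<and> snd x < snd y then 1 else 0)"

definition gt :: "arc \<Rightarrow> arc \<Rightarrow> nat" where
  "gt x y = (if fst y < fst x then 1 else 0)"

definition ne :: "arc multiset \<Rightarrow> nat" where
  "ne D = (\<Sum>x\<in>#D. \<Sum>y\<in>#D. g x y)"

definition KK :: "arc multiset \<Rightarrow> nat" where
  "KK D = (\<Sum>x\<in>#D. \<Sum>y\<in>#D. gt x y)"

definition phi :: "arc multiset \<Rightarrow> nat" where
  "phi D = (\<Sum>x\<in>#D. (case fst x of enat n \<Rightarrow> n | \<infinity> \<Rightarrow> 0))"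

lemma KK_fst: "image_mset fst D = image_mset fst D' \<Longrightarrow> KK D = KK D'"
proof -
  have "KK D = (\<Sum>a\<in>#image_mset fst D. \<Sum>b\<in>#image_mset fst D. if b < a then 1 else 0)" for D
    by (simp add: KK_def gt_def multiset.map_comp o_def)
  then show "image_mset fst D = image_mset fst D' \<Longrightarrow> KK D = KK D'" by metis
qed

lemma phi_fst: "image_mset fst D = image_mset fst D' \<Longrightarrow> phi D = phi D'"
proof -
  have "phi D = (\<Sum>a\<in>#image_mset fst D. (case a of enat n \<Rightarrow> n | \<infinity> \<Rightarrow> 0))" for D
    by (simp add: phi_def multiset.map_comp o_def)
  then show "image_mset fst D = image_mset fst D' \<Longrightarrow> phi D = phi D'" by metis
qed

lemma ne_le_KK: "ne D \<le> KK D"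
  unfolding ne_def KK_def
  by (intro sum_mset_mono) (auto simp: g_def gt_def)

lemma ne_split:
  "ne (add_mset x1 (add_mset x2 R)) = ne R + (\<Sum>z\<in>#R. g z x1 + g z x2 + g x1 z + g x2 z) + (g x1 x2 + g x2 x1)"
  by (simp add: ne_def g_def sum_mset.distrib algebra_simps)

definition swap :: "arc multiset \<Rightarrow> arc multiset \<Rightarrow> bool" where
  "swap D D' \<longleftrightarrow> (\<exists>s1 s2 t1 t2 M. s2 < s1 \<and> t2 < t1 \<and> enat t1 < s2 \<and>
      D = add_mset (s1,t1) (add_mset (s2,t2) M) \<and> D' = add_mset (s1,t2) (add_mset (s2,t1) M))"

lemma swap_arc_move: "swap D D' \<Longrightarrow> arc_move D D'"
proof -
  assume "swap D D'"
  then obtain s1 s2 t1 t2 M where h: "s2 < s1" "t2 < t1" "enat t1 < s2"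
    "D = add_mset (s1,t1) (add_mset (s2,t2) M)" "D' = add_mset (s1,t2) (add_mset (s2,t1) M)"
    unfolding swap_def by blast
  obtain b where b: "s2 = enat b" using h(1) by (cases s2) auto
  show ?thesis
  proof (cases s1)
    case (enat a)
    have "a > b" "b > t1" "t1 > t2" using h b enat by auto
    then show ?thesis unfolding arc_move_def using h b enat
      by (intro disjI1 exI[of _ a] exI[of _ b] exI[of _ t1] exI[of _ t2]) simp
  next
    case infinity
    have "b > t1" "t1 > t2" using h b by auto
    then show ?thesis unfolding arc_move_def using h b infinity
      by (intro disjI2 exI[of _ b] exI[of _ t1] exI[of _ t2]) (simp add: add_mset_commute)
  qed
qed

lemma swap_images: "swap D D' \<Longrightarrow> image_mset fst D' = image_mset fst D \<and> image_mset snd D' = image_mset snd D"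
  unfolding swap_def by (auto simp: add_mset_commute)

lemma sub2_split: "{#x, y#} \<subseteq># D \<Longrightarrow> D = add_mset x (add_mset y (D - {#x, y#}))"
proof -
  assume h: "{#x, y#} \<subseteq># D"
  have e: "{#x, y#} + (D - {#x, y#}) = add_mset x (add_mset y (D - {#x, y#}))" by simp
  have "D = {#x, y#} + (D - {#x, y#})" using subset_mset.add_diff_inverse[OF h] by simp
  then show ?thesis using e by (rule trans)
qed

lemma sub2_obtain: "{#x, y#} \<subseteq># D \<Longrightarrow> \<exists>M. D = add_mset x (add_mset y M) \<and> D - {#x, y#} = M"
  using sub2_split by (intro exI[of _ "D - {#x, y#}"]) simp

lemma mA: "a > b \<Longrightarrow> b > c \<Longrightarrow> c > d \<Longrightarrow> {#(enat a, c), (enat b, d)#} \<subseteq># D \<Longrightarrow>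
   swap D (add_mset (enat a, d) (add_mset (enat b, c) (D - {#(enat a, c), (enat b, d)#})))"
proof -
  assume A: "a > b" "b > c" "c > d" "{#(enat a, c), (enat b, d)#} \<subseteq># D"
  obtain M where e1: "D = add_mset (enat a, c) (add_mset (enat b, d) M)" and e2: "D - {#(enat a, c), (enat b, d)#} = M"
    using sub2_obtain[OF A(4)] by blast
  show ?thesis unfolding e2 unfolding e1 swap_def using A
    by (intro exI[of _ "enat a"] exI[of _ "enat b"] exI[of _ c] exI[of _ d] exI[of _ M]) simp
qed

lemma mB: "a > b \<Longrightarrow> b > c \<Longrightarrow> {#(enat a, c), (\<infinity>, b)#} \<subseteq># D \<Longrightarrow>
   swap D (add_mset (enat a, b) (add_mset (\<infinity>, c) (D - {#(enat a, c), (\<infinity>, b)#})))"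
proof -
  assume B: "a > b" "b > c" "{#(enat a, c), (\<infinity>, b)#} \<subseteq># D"
  obtain M where e1: "D = add_mset (enat a, c) (add_mset (\<infinity>, b) M)" and e2: "D - {#(enat a, c), (\<infinity>, b)#} = M"
    using sub2_obtain[OF B(3)] by blast
  show ?thesis unfolding e2 unfolding e1 swap_def using B
    by (intro exI[of _ "\<infinity>"] exI[of _ "enat a"] exI[of _ b] exI[of _ c] exI[of _ M]) (simp add: add_mset_commute)
qed

lemma mC: "a > b \<Longrightarrow> b > c \<Longrightarrow> c > d \<Longrightarrow> {#(enat a, c), (enat b, d)#} \<subseteq># D \<Longrightarrow>
   phi (add_mset (enat a, b) (add_mset (enat c, d) (D - {#(enat a, c), (enat b, d)#}))) < phi D"
proof -
  assume A: "a > b" "b > c" "c > d" "{#(enat a, c), (enat b, d)#} \<subseteq># D"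
  obtain M where e1: "D = add_mset (enat a, c) (add_mset (enat b, d) M)" and e2: "D - {#(enat a, c), (enat b, d)#} = M"
    using sub2_obtain[OF A(4)] by blast
  show ?thesis unfolding e2 unfolding e1 using A by (simp add: phi_def)
qed

lemma mD: "a > b \<Longrightarrow> b > c \<Longrightarrow> {#(enat a, c), (\<infinity>, b)#} \<subseteq># D \<Longrightarrow>
   phi (add_mset (enat b, c) (add_mset (\<infinity>, a) (D - {#(enat a, c), (\<infinity>, b)#}))) < phi D"
proof -
  assume B: "a > b" "b > c" "{#(enat a, c), (\<infinity>, b)#} \<subseteq># D"
  obtain M where e1: "D = add_mset (enat a, c) (add_mset (\<infinity>, b) M)" and e2: "D - {#(enat a, c), (\<infinity>, b)#} = M"
    using sub2_obtain[OF B(3)] by blast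
  show ?thesis unfolding e2 unfolding e1 using B by (simp add: phi_def)
qed

lemma arc_move_cases: "arc_move D D' \<Longrightarrow> swap D D' \<or> phi D' < phi D"
  unfolding arc_move_def
  apply (elim disjE exE conjE)
  subgoal by (simp add: mA)
  subgoal by (simp add: mC)
  subgoal by (simp add: mB)
  subgoal by (simp add: mD)
  done

lemma pw_le:
  fixes s1 s2 u :: "'a::linorder" and t1 t2 v :: "'b::linorder"
  assumes "s2 < s1" "t2 < t1" "u \<noteq> s1" "u \<noteq> s2" "v \<noteq> t1" "v \<noteq> t2"
  shows "(if s1 < u \<and> v < t1 then 1 else 0) + (if s2 < u \<and> v < t2 then 1 else 0) + (if u < s1 \<and> t1 < v then 1 else 0) + (if u < s2 \<and> t2 < v then 1 else (0::nat))
       \<le> (if s1 < u \<and> v < t2 then 1 else 0) + (if s2 < u \<and> v < t1 then 1 else 0) + (if u < s1 \<and> t2 < v then 1 else 0) + (if u < s2 \<and> t1 < v then 1 else (0::nat))"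
  using assms
  by (cases "u < s2"; cases "u < s1"; cases "v < t2"; cases "v < t1") (auto dest: order.strict_trans)

lemma pw_eq:
  fixes s1 s2 u :: "'a::linorder" and t1 t2 v :: "'b::linorder"
  assumes "s2 < s1" "t2 < t1" "u \<noteq> s1" "u \<noteq> s2" "v \<noteq> t1" "v \<noteq> t2"
    "\<not> (s2 < u \<and> u < s1 \<and> t2 < v \<and> v < t1)"
  shows "(if s1 < u \<and> v < t1 then 1 else 0) + (if s2 < u \<and> v < t2 then 1 else 0) + (if u < s1 \<and> t1 < v then 1 else 0) + (if u < s2 \<and> t2 < v then 1 else (0::nat))
       = (if s1 < u \<and> v < t2 then 1 else 0) + (if s2 < u \<and> v < t1 then 1 else 0) + (if u < s1 \<and> t2 < v then 1 else 0) + (if u < s2 \<and> t1 < v then 1 else (0::nat))"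
  using assms
  by (cases "u < s2"; cases "u < s1"; cases "v < t2"; cases "v < t1") (auto dest: order.strict_trans)

definition qq :: "arc \<Rightarrow> arc \<Rightarrow> arc \<Rightarrow> nat" where
  "qq x1 x2 z = g z x1 + g z x2 + g x1 z + g x2 z"

lemma ne_split': "ne (add_mset x1 (add_mset x2 R)) = ne R + (\<Sum>z\<in>#R. qq x1 x2 z) + (g x1 x2 + g x2 x1)"
  unfolding qq_def by (rule ne_split)

lemma ne_swap:
  fixes s1 s2 :: enat and t1 t2 :: nat
  assumes "s2 < s1" "t2 < t1"
    and dist: "\<forall>z\<in>#M. fst z \<noteq> s1 \<and> fst z \<noteq> s2 \<and> snd z \<noteq> t1 \<and> snd z \<noteq> t2"
  shows "ne (add_mset (s1,t1) (add_mset (s2,t2) M)) < ne (add_mset (s1,t2) (add_mset (s2,t1) M))"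
    and "(\<forall>z\<in>#M. \<not> (s2 < fst z \<and> fst z < s1 \<and> t2 < snd z \<and> snd z < t1)) \<Longrightarrow>
      ne (add_mset (s1,t2) (add_mset (s2,t1) M)) = ne (add_mset (s1,t1) (add_mset (s2,t2) M)) + 1"
proof -
  have p1: "g (s1,t1) (s2,t2) + g (s2,t2) (s1,t1) = 0" using assms(1,2) by (auto simp: g_def)
  have p2: "g (s1,t2) (s2,t1) + g (s2,t1) (s1,t2) = 1" using assms(1,2) by (auto simp: g_def)
  have le: "(\<Sum>z\<in>#M. qq (s1,t1) (s2,t2) z) \<le> (\<Sum>z\<in>#M. qq (s1,t2) (s2,t1) z)"
  proof (rule sum_mset_mono)
    fix z assume "z \<in># M"
    then show "qq (s1,t1) (s2,t2) z \<le> qq (s1,t2) (s2,t1) z"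
      using assms(1,2) dist pw_le[OF assms(1,2), of "fst z" "snd z"] by (cases z) (auto simp: qq_def g_def)
  qed
  show "ne (add_mset (s1,t1) (add_mset (s2,t2) M)) < ne (add_mset (s1,t2) (add_mset (s2,t1) M))"
    unfolding ne_split' p1 p2 using le by simp
  assume nb: "\<forall>z\<in>#M. \<not> (s2 < fst z \<and> fst z < s1 \<and> t2 < snd z \<and> snd z < t1)"
  have eq: "(\<Sum>z\<in>#M. qq (s1,t1) (s2,t2) z) = (\<Sum>z\<in>#M. qq (s1,t2) (s2,t1) z)"
  proof (rule arg_cong[of _ _ sum_mset], rule image_mset_cong)
    fix z assume "z \<in># M"
    then show "qq (s1,t1) (s2,t2) z = qq (s1,t2) (s2,t1) z"
      using assms(1,2) dist nb pw_eq[OF assms(1,2), of "fst z" "snd z"] by (cases z) (auto simp: qq_def g_def)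
  qed
  show "ne (add_mset (s1,t2) (add_mset (s2,t1) M)) = ne (add_mset (s1,t1) (add_mset (s2,t2) M)) + 1"
    unfolding ne_split' p1 p2 using eq by simp
qed

lemma rowcard: "1 \<le> i \<Longrightarrow> card (row_boxes \<beta> \<gamma> i) = conj \<beta> i - conj \<gamma> i"
proof -
  assume i: "1 \<le> i"
  have "row_boxes \<beta> \<gamma> i = (\<lambda>c. (i, c)) ` {conj \<gamma> i<..conj \<beta> i}"
    using i by (auto simp: row_boxes_def skew_boxes_def image_iff)
  moreover have "inj_on (\<lambda>c. (i, c)) {conj \<gamma> i<..conj \<beta> i}" by (auto simp: inj_on_def)
  ultimately show ?thesis by (simp add: card_image)
qed

lemma two_split: "x \<in># D \<Longrightarrow> y \<in># D \<Longrightarrow> x \<noteq> y \<Longrightarrow> \<exists>M. D = add_mset x (add_mset y M)"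
proof -
  assume h: "x \<in># D" "y \<in># D" "x \<noteq> y"
  obtain M1 where M1: "D = add_mset x M1" using h(1) by (blast dest: multi_member_split)
  have "y \<in># M1" using h M1 by auto
  then obtain M where "M1 = add_mset y M" by (blast dest: multi_member_split)
  then show ?thesis using M1 by blast
qed

locale setting =
  fixes \<alpha> \<beta> \<gamma> :: "nat list" and T :: "nat \<times> nat \<Rightarrow> nat"
  assumes LR: "LR_tableau \<alpha> \<beta> \<gamma> T"
    and h6: "num_entries \<beta> \<gamma> T 2 = num_entries \<beta> \<gamma> T 1
         \<or> num_entries \<beta> \<gamma> T 2 + 1 = num_entries \<beta> \<gamma> T 1"
    and h7: "\<forall>i\<ge>1. card (row_boxes \<beta> \<gamma> i) \<le> 1"
    and h8: "\<forall>i j. 1 \<le> i \<longrightarrow> 1 \<le> j \<longrightarrow> entries_in_row \<beta> \<gamma> T 2 j > 0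
           \<longrightarrow> entries_in_row \<beta> \<gamma> T 1 i > 0 \<longrightarrow> j > i"
begin

abbreviation "P \<equiv> D_Gamma \<alpha> \<beta> \<gamma> T"

lemma P_valid: "D \<in> P \<Longrightarrow> a \<in># D \<Longrightarrow> valid_arc a"
  by (auto simp: D_Gamma_def arc_diagram_def)

lemma valid_fst: "valid_arc a \<Longrightarrow> fst a \<noteq> enat 0 \<and> 1 \<le> snd a"
  by (cases a) (auto simp: valid_arc_def zero_enat_def[symmetric])

lemma cnt_fst: "D \<in> P \<Longrightarrow> count (image_mset fst D) s =
   (case s of \<infinity> \<Rightarrow> conj \<alpha> 1 - conj \<alpha> 2 | enat i \<Rightarrow> if 1 \<le> i then entries_in_row \<beta> \<gamma> T 2 i else 0)"
proof -
  assume D: "D \<in> P"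
  show ?thesis
  proof (cases s)
    case (enat i)
    show ?thesis
    proof (cases "1 \<le> i")
      case True
      then show ?thesis using D enat
        by (auto simp: count_image_size D_Gamma_def has_LR_type_def)
    next
      case False
      then have "i = 0" by simp
      have "\<forall>a\<in>#D. fst a \<noteq> enat 0" using D P_valid valid_fst by blast
      then have "count (image_mset fst D) (enat 0) = 0" by (auto simp: count_eq_zero_iff)
      then show ?thesis using enat \<open>i = 0\<close> by simp
    qed
  next
    case infinity
    have "size (filter_mset is_pole D) = conj \<alpha> 1 - conj \<alpha> 2"
      using D by (simp add: D_Gamma_def arc_diagram_def)
    then show ?thesis using infinity by (simp add: count_image_size is_pole_def[abs_def])
  qed
qed

lemma cnt_sum: "D \<in> P \<Longrightarrow> 1 \<le> i \<Longrightarrow>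
   count (image_mset fst D) (enat i) + count (image_mset snd D) i = conj \<beta> i - conj \<gamma> i"
proof -
  assume D: "D \<in> P" and i: "1 \<le> i"
  have "valid_arc a \<Longrightarrow> \<not> (fst a = enat i \<and> snd a = i)" for a by (auto simp: valid_arc_def)
  then have dis: "\<forall>a\<in>#D. \<not> (fst a = enat i \<and> snd a = i)"
    using P_valid[OF D] by blast
  have "size (filter_mset (\<lambda>a. fst a = enat i \<or> snd a = i) D) = conj \<beta> i - conj \<gamma> i"
    using D i by (simp add: D_Gamma_def arc_diagram_def)
  then show ?thesis using size_filter_or[OF dis] by (simp add: count_image_size)
qed

lemma cnt_snd: "D \<in> P \<Longrightarrow> count (image_mset snd D) i =
   (if 1 \<le> i then (conj \<beta> i - conj \<gamma> i) - entries_in_row \<beta> \<gamma> T 2 i else 0)"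
proof (cases "1 \<le> i")
  case True
  assume D: "D \<in> P"
  show ?thesis using cnt_sum[OF D True] cnt_fst[OF D, of "enat i"] True by simp
next
  case False
  assume D: "D \<in> P"
  have "\<forall>a\<in>#D. snd a \<noteq> i" using D P_valid valid_fst False by fastforce
  then have "count (image_mset snd D) i = 0" by (auto simp: count_eq_zero_iff)
  then show ?thesis using False by simp
qed

lemma images_eq: "D1 \<in> P \<Longrightarrow> D2 \<in> P \<Longrightarrow>
   image_mset fst D1 = image_mset fst D2 \<and> image_mset snd D1 = image_mset snd D2"
  by (auto intro!: multiset_eqI simp: cnt_fst cnt_snd)

lemma char: "D \<in> P \<Longrightarrow> (\<forall>a\<in>#D'. valid_arc a) \<Longrightarrow> image_mset fst D' = image_mset fst D
   \<Longrightarrow> image_mset snd D' = image_mset snd D \<Longrightarrow> D' \<in> P"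
proof -
  assume D: "D \<in> P" and v: "\<forall>a\<in>#D'. valid_arc a" and f: "image_mset fst D' = image_mset fst D"
    and s: "image_mset snd D' = image_mset snd D"
  have sf: "size (filter_mset (\<lambda>a. Q (fst a)) D') = size (filter_mset (\<lambda>a. Q (fst a)) D)" for Q
    by (simp add: size_filter_image_gen f)
  have sum: "size (filter_mset (\<lambda>a. fst a = enat i \<or> snd a = i) E) =
      count (image_mset fst E) (enat i) + count (image_mset snd E) i" if "\<forall>a\<in>#E. valid_arc a" for E i
  proof -
    have dis: "\<forall>a\<in>#E. \<not> (fst a = enat i \<and> snd a = i)"
      using that by (auto simp: valid_arc_def)
    show ?thesis using size_filter_or[OF dis] by (simp add: count_image_size)
  qed
  have vD: "\<forall>a\<in>#D. valid_arc a" using D P_valid by blast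
  have "arc_diagram \<alpha> \<beta> \<gamma> D'"
    using D sf[of "\<lambda>s. s \<noteq> \<infinity>"] sf[of "\<lambda>s. s = \<infinity>"] sum[OF v] sum[OF vD] v f s
    by (simp add: D_Gamma_def arc_diagram_def is_pole_def[abs_def])
  moreover have "has_LR_type \<beta> \<gamma> T D'"
    unfolding has_LR_type_def
  proof (intro allI impI)
    fix i :: nat assume i: "1 \<le> i"
    have "size (filter_mset (\<lambda>a. fst a = enat i) D') = size (filter_mset (\<lambda>a. fst a = enat i) D)"
      using sf[of "\<lambda>s. s = enat i"] by simp
    then show "size (filter_mset (\<lambda>a. fst a = enat i) D') = entries_in_row \<beta> \<gamma> T 2 i"
      using D i by (simp add: D_Gamma_def has_LR_type_def)
  qed
  ultimately show ?thesis by (simp add: D_Gamma_def)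
qed

end



context setting begin

lemma poles_le1: "conj \<alpha> 1 - conj \<alpha> 2 \<le> 1"
  using LR h6 by (auto simp: LR_tableau_def)

lemma dist_fst: "D \<in> P \<Longrightarrow> count (image_mset fst D) s \<le> 1"
proof -
  assume D: "D \<in> P"
  show ?thesis
  proof (cases s)
    case (enat i)
    show ?thesis
    proof (cases "1 \<le> i")
      case True
      then show ?thesis using cnt_sum[OF D True] rowcard[OF True] h7 enat by fastforce
    next
      case False then show ?thesis using cnt_fst[OF D, of s] enat by simp
    qed
  next
    case infinity then show ?thesis using cnt_fst[OF D, of s] poles_le1 by simp
  qed
qed

lemma dist_snd: "D \<in> P \<Longrightarrow> count (image_mset snd D) t \<le> 1"
proof -
  assume D: "D \<in> P"
  show ?thesis
  proof (cases "1 \<le> t")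
    case True
    then show ?thesis using cnt_sum[OF D True] rowcard[OF True] h7 by fastforce
  next
    case False then show ?thesis using cnt_snd[OF D, of t] by simp
  qed
qed

lemma dist_M: "D \<in> P \<Longrightarrow> D = add_mset x1 (add_mset x2 M) \<Longrightarrow> z \<in># M \<Longrightarrow>
   fst z \<noteq> fst x1 \<and> fst z \<noteq> fst x2 \<and> snd z \<noteq> snd x1 \<and> snd z \<noteq> snd x2"
proof -
  assume D: "D \<in> P" and e: "D = add_mset x1 (add_mset x2 M)" and z: "z \<in># M"
  obtain M0 where M0: "M = add_mset z M0" using z by (blast dest: multi_member_split)
  have f1: "count (image_mset fst D) (fst x1) \<le> 1" "count (image_mset fst D) (fst x2) \<le> 1"
    "count (image_mset snd D) (snd x1) \<le> 1" "count (image_mset snd D) (snd x2) \<le> 1"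
    using dist_fst[OF D] dist_snd[OF D] by auto
  show ?thesis using f1 unfolding e M0 by (auto split: if_splits)
qed

lemma dist2: "D \<in> P \<Longrightarrow> x \<in># D \<Longrightarrow> y \<in># D \<Longrightarrow> x \<noteq> y \<Longrightarrow> snd x \<noteq> snd y"
proof -
  assume D: "D \<in> P" and h: "x \<in># D" "y \<in># D" "x \<noteq> y"
  obtain M where e: "D = add_mset x (add_mset y M)" using two_split[OF h] by blast
  have "count (image_mset snd D) (snd x) \<le> 1" using dist_snd[OF D] by auto
  then show ?thesis unfolding e by auto
qed

lemma sep: "D \<in> P \<Longrightarrow> x \<in># D \<Longrightarrow> y \<in># D \<Longrightarrow> enat (snd y) < fst x"
proof -
  assume D: "D \<in> P" and x: "x \<in># D" and y: "y \<in># D"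
  show ?thesis
  proof (cases "fst x")
    case infinity then show ?thesis by simp
  next
    case (enat i)
    have vx: "valid_arc x" and vy: "valid_arc y" using P_valid D x y by auto
    have i1: "1 \<le> i" using vx enat by (cases x) (auto simp: valid_arc_def zero_enat_def[symmetric] enat_0_iff)
    have "count (image_mset fst D) (enat i) \<ge> 1" using x enat
      by (metis One_nat_def Suc_leI count_greater_zero_iff image_eqI set_image_mset)
    then have e2i: "entries_in_row \<beta> \<gamma> T 2 i > 0" using cnt_fst[OF D, of "enat i"] i1 by simp
    define j where "j = snd y"
    have j1: "1 \<le> j" using vy j_def by (simp add: valid_arc_def)
    have "count (image_mset snd D) j \<ge> 1" using y j_def
      by (metis One_nat_def Suc_leI count_greater_zero_iff image_eqI set_image_mset)
    moreover have "card (row_boxes \<beta> \<gamma> j) = conj \<beta> j - conj \<gamma> j" using rowcard[OF j1] .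
    moreover have "card (row_boxes \<beta> \<gamma> j) \<le> 1" using h7 j1 by blast
    ultimately have c0: "count (image_mset fst D) (enat j) = 0" and cb: "card (row_boxes \<beta> \<gamma> j) \<ge> 1"
      using cnt_sum[OF D j1] by linarith+
    then have e2j: "entries_in_row \<beta> \<gamma> T 2 j = 0" using cnt_fst[OF D, of "enat j"] j1 by simp
    have "row_boxes \<beta> \<gamma> j \<noteq> {}" using cb by (metis card.empty not_one_le_zero)
    then obtain b where b: "b \<in> row_boxes \<beta> \<gamma> j" by blast
    have fin: "finite (row_boxes \<beta> \<gamma> j)" using cb card_ge_0_finite[of "row_boxes \<beta> \<gamma> j"] by linarith
    have bs: "b \<in> skew_boxes \<beta> \<gamma>" using b by (simp add: row_boxes_def)
    have "T b \<in> {1, 2}" using LR bs by (simp add: LR_tableau_def)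
    moreover have "T b \<noteq> 2"
    proof
      assume "T b = 2"
      then have "b \<in> {b \<in> row_boxes \<beta> \<gamma> j. T b = 2}" using b by simp
      moreover have "finite {b \<in> row_boxes \<beta> \<gamma> j. T b = 2}" using fin by simp
      ultimately have "card {b \<in> row_boxes \<beta> \<gamma> j. T b = 2} > 0" using card_gt_0_iff by blast
      then show False using e2j by (simp add: entries_in_row_def)
    qed
    ultimately have "T b = 1" by simp
    then have "b \<in> {b \<in> row_boxes \<beta> \<gamma> j. T b = 1}" using b by simp
    moreover have "finite {b \<in> row_boxes \<beta> \<gamma> j. T b = 1}" using fin by simp
      ultimately have "card {b \<in> row_boxes \<beta> \<gamma> j. T b = 1} > 0" using card_gt_0_iff by blast
    then have "entries_in_row \<beta> \<gamma> T 1 j > 0" by (simp add: entries_in_row_def)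
    then have "i > j" using h8 i1 j1 e2i by blast
    then show ?thesis using enat j_def by simp
  qed
qed

end


context setting begin

lemma swapP: "D \<in> P \<Longrightarrow> swap D D' \<Longrightarrow> D' \<in> P"
proof -
  assume D: "D \<in> P" and s: "swap D D'"
  then obtain s1 s2 t1 t2 M where h: "s2 < s1" "t2 < t1" "enat t1 < s2"
    "D = add_mset (s1,t1) (add_mset (s2,t2) M)" "D' = add_mset (s1,t2) (add_mset (s2,t1) M)"
    unfolding swap_def by blast
  have v: "\<forall>a\<in>#D. valid_arc a" using D P_valid by blast
  have "\<forall>a\<in>#D'. valid_arc a"
  proof
    fix a assume a: "a \<in># D'"
    have t2: "1 \<le> t2" "1 \<le> t1" using v h(4) by (auto simp: valid_arc_def)
    have "enat t2 < s1" using h(1-3) by (metis enat_ord_simps(2) order.strict_trans)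
    then show "valid_arc a" using a h v t2 by (auto simp: valid_arc_def)
  qed
  then show ?thesis using char[OF D] swap_images[OF s] by blast
qed

lemma ne_strict: "D \<in> P \<Longrightarrow> swap D D' \<Longrightarrow> ne D < ne D'"
proof -
  assume D: "D \<in> P" and s: "swap D D'"
  then obtain s1 s2 t1 t2 M where h: "s2 < s1" "t2 < t1" "enat t1 < s2"
    "D = add_mset (s1,t1) (add_mset (s2,t2) M)" "D' = add_mset (s1,t2) (add_mset (s2,t1) M)"
    unfolding swap_def by blast
  have "\<forall>z\<in>#M. fst z \<noteq> s1 \<and> fst z \<noteq> s2 \<and> snd z \<noteq> t1 \<and> snd z \<noteq> t2"
    using dist_M[OF D h(4)] by auto
  from ne_swap(1)[OF h(1,2) this] show ?thesis using h by simp
qed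

lemma box: "D \<in> P \<Longrightarrow> swap D D' \<Longrightarrow> ne D' \<noteq> ne D + 1 \<Longrightarrow>
   \<exists>w w2. swap D w \<and> swap w w2 \<and> swap w2 D'"
proof -
  assume D: "D \<in> P" and s: "swap D D'" and n: "ne D' \<noteq> ne D + 1"
  then obtain s1 s2 t1 t2 M where h: "s2 < s1" "t2 < t1" "enat t1 < s2"
    "D = add_mset (s1,t1) (add_mset (s2,t2) M)" "D' = add_mset (s1,t2) (add_mset (s2,t1) M)"
    unfolding swap_def by blast
  have "\<forall>z\<in>#M. fst z \<noteq> s1 \<and> fst z \<noteq> s2 \<and> snd z \<noteq> t1 \<and> snd z \<noteq> t2"
    using dist_M[OF D h(4)] by auto
  note ns = ne_swap(2)[OF h(1,2) this]
  have "\<exists>z\<in>#M. s2 < fst z \<and> fst z < s1 \<and> t2 < snd z \<and> snd z < t1"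
  proof (rule ccontr)
    assume "\<not> ?thesis"
    then have "ne D' = ne D + 1" using ns h(4,5) by blast
    then show False using n by simp
  qed
  then obtain z where z: "z \<in># M"
    "s2 < fst z" "fst z < s1" "t2 < snd z" "snd z < t1" by blast
  obtain u v where uv: "z = (u, v)" by (cases z)
  obtain M0 where M0: "M = add_mset z M0" using z(1) by (blast dest: multi_member_split)
  have zD: "z \<in># D" "(s1,t1) \<in># D" using h(4) z(1) by auto
  have a1: "enat t1 < u" using sep[OF D zD(1) zD(2)] uv by simp
  have a2: "enat v < u" using P_valid[OF D zD(1)] uv by (simp add: valid_arc_def)
  define w where "w = add_mset (s1,v) (add_mset (u,t1) (add_mset (s2,t2) M0))"
  define w2 where "w2 = add_mset (u,t2) (add_mset (s2,t1) (add_mset (s1,v) M0))"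
  have "swap D w" unfolding swap_def w_def using h z uv M0 a1
    by (intro exI[of _ s1] exI[of _ u] exI[of _ t1] exI[of _ v] exI[of _ "add_mset (s2,t2) M0"])
      (simp add: add_mset_commute)
  moreover have "swap w w2" unfolding swap_def w_def w2_def using h z uv M0
    by (intro exI[of _ u] exI[of _ s2] exI[of _ t1] exI[of _ t2] exI[of _ "add_mset (s1,v) M0"])
      (simp add: add_mset_commute)
  moreover have "swap w2 D'" unfolding swap_def w2_def using h z uv M0 a2
    by (intro exI[of _ s1] exI[of _ u] exI[of _ v] exI[of _ t2] exI[of _ "add_mset (s2,t1) M0"])
      (simp add: add_mset_commute)
  ultimately show ?thesis by blast
qed

lemma cross_swap: "D \<in> P \<Longrightarrow> x \<in># D \<Longrightarrow> y \<in># D \<Longrightarrow> fst y < fst x \<Longrightarrow> snd y < snd x \<Longrightarrow>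
   \<exists>D'. swap D D'"
proof -
  assume D: "D \<in> P" and h: "x \<in># D" "y \<in># D" "fst y < fst x" "snd y < snd x"
  have ne: "x \<noteq> y" using h(3) by auto
  obtain M where e: "D = add_mset x (add_mset y M)" using two_split[OF h(1,2) ne] by blast
  have lt: "enat (snd x) < fst y" using sep[OF D h(2) h(1)] .
  obtain s1 t1 where x: "x = (s1, t1)" by (cases x)
  obtain s2 t2 where y: "y = (s2, t2)" by (cases y)
  have "swap D (add_mset (s1, t2) (add_mset (s2, t1) M))"
    unfolding swap_def
    apply (rule exI[of _ s1], rule exI[of _ s2], rule exI[of _ t1], rule exI[of _ t2], rule exI[of _ M])
    using h(3,4) lt e x y by simp
  then show ?thesis by blast
qed

end


context setting begin

abbreviation "Pm \<equiv> (\<lambda>a b. a \<in> P \<and> swap a b)"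

lemma swap_le: "swap D D' \<Longrightarrow> arc_le D' D"
  unfolding arc_le_def by (rule r_into_rtranclp, rule swap_arc_move)

lemma path_phi: "arc_move\<^sup>*\<^sup>* y x \<Longrightarrow> phi x \<le> phi y \<and> (phi x = phi y \<longrightarrow> swap\<^sup>*\<^sup>* y x)"
proof (induction rule: rtranclp_induct)
  case base then show ?case by simp
next
  case (step z x)
  from arc_move_cases[OF step(2)] show ?case
  proof
    assume s: "swap z x"
    then have "phi x = phi z" using swap_images phi_fst by metis
    then show ?thesis using step s by (metis rtranclp.rtrancl_into_rtrancl)
  next
    assume "phi x < phi z" then show ?thesis using step by auto
  qed
qed

lemma swap_path: "swap\<^sup>*\<^sup>* y x \<Longrightarrow> y \<in> P \<Longrightarrow> Pm\<^sup>*\<^sup>* y x \<and> x \<in> P"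
proof (induction rule: rtranclp_induct)
  case base then show ?case by simp
next
  case (step z x)
  then show ?case using swapP by (metis (mono_tags, lifting) rtranclp.rtrancl_into_rtrancl)
qed

lemma le_path: "x \<in> P \<Longrightarrow> y \<in> P \<Longrightarrow> arc_le x y \<Longrightarrow> Pm\<^sup>*\<^sup>* y x"
proof -
  assume x: "x \<in> P" and y: "y \<in> P" and l: "arc_le x y"
  have "phi x = phi y" using images_eq[OF x y] phi_fst by blast
  then have "swap\<^sup>*\<^sup>* y x" using path_phi l unfolding arc_le_def by blast
  then show ?thesis using swap_path y by blast
qed

lemma Pm_rank: "Pm\<^sup>*\<^sup>* y x \<Longrightarrow> x = y \<or> ne y < ne x"
proof (induction rule: rtranclp_induct)
  case base then show ?case by simp
next
  case (step z x)
  then show ?case using ne_strict by fastforce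
qed

lemma Pm_le: "Pm\<^sup>*\<^sup>* y x \<Longrightarrow> arc_le x y"
proof (induction rule: rtranclp_induct)
  case base then show ?case by (simp add: arc_le_def)
next
  case (step z x)
  then show ?case unfolding arc_le_def by (meson rtranclp.rtrancl_into_rtrancl swap_arc_move)
qed

lemma rank_lt: "x \<in> P \<Longrightarrow> y \<in> P \<Longrightarrow> arc_le x y \<Longrightarrow> x \<noteq> y \<Longrightarrow> ne y < ne x"
  using le_path Pm_rank by blast

lemma between: "x \<in> P \<Longrightarrow> y \<in> P \<Longrightarrow> arc_le x y \<Longrightarrow> ne y + 2 \<le> ne x \<Longrightarrow>
  \<exists>w\<in>P. arc_le x w \<and> arc_le w y \<and> ne y < ne w \<and> ne w < ne x"
proof -
  assume x: "x \<in> P" and y: "y \<in> P" and l: "arc_le x y" and r: "ne y + 2 \<le> ne x"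
  have p: "Pm\<^sup>*\<^sup>* y x" using le_path[OF x y l] .
  then show ?thesis
  proof (cases rule: converse_rtranclpE)
    case base then show ?thesis using r by simp
  next
    case (step z)
    have zP: "z \<in> P" using step swapP by blast
    show ?thesis
    proof (cases "z = x")
      case True
      then have "swap y x" using step by simp
      then obtain w w2 where w: "swap y w" "swap w w2" "swap w2 x" using box[OF y] r by force
      have wP: "w \<in> P" using swapP y w(1) by blast
      have w2P: "w2 \<in> P" using swapP wP w(2) by blast
      have "ne y < ne w" "ne w < ne w2" "ne w2 < ne x" using ne_strict y wP w2P w by auto
      moreover have "arc_le x w" unfolding arc_le_def using w(2,3) swap_arc_move
        by (meson rtranclp.rtrancl_into_rtrancl r_into_rtranclp)
      moreover have "arc_le w y" using swap_le w(1) .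
      ultimately show ?thesis using wP by force
    next
      case False
      have "ne z < ne x" using Pm_rank step(2) False by blast
      moreover have "ne y < ne z" using ne_strict y step(1) by blast
      moreover have "arc_le x z" using Pm_le step(2) .
      moreover have "arc_le z y" using swap_le step(1) by blast
      ultimately show ?thesis using zP by blast
    qed
  qed
qed

lemma minimal_rank: "D \<in> P \<Longrightarrow> \<forall>w\<in>P. arc_le w D \<longrightarrow> w = D \<Longrightarrow> ne D = KK D"
proof -
  assume D: "D \<in> P" and m: "\<forall>w\<in>P. arc_le w D \<longrightarrow> w = D"
  have "g x y = gt x y" if x: "x \<in># D" and y: "y \<in># D" for x y
  proof (cases "fst y < fst x")
    case True
    have "\<not> snd y < snd x"
    proof
      assume "snd y < snd x"
      then obtain D' where s: "swap D D'" using cross_swap[OF D x y True] by blast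
      have "D' \<in> P" using swapP D s by blast
      moreover have "arc_le D' D" using swap_le s .
      moreover have "ne D < ne D'" using ne_strict D s by blast
      ultimately show False using m by fastforce
    qed
    moreover have "snd x \<noteq> snd y" using dist2[OF D x y] True by auto
    ultimately show ?thesis using True by (simp add: g_def gt_def)
  next
    case False then show ?thesis by (simp add: g_def gt_def)
  qed
  then show ?thesis unfolding ne_def KK_def
    by (intro arg_cong[of _ _ sum_mset] image_mset_cong) auto
qed

lemma maximal_rank: "D \<in> P \<Longrightarrow> \<forall>w\<in>P. arc_le D w \<longrightarrow> w = D \<Longrightarrow> ne D = 0"
proof (rule ccontr)
  assume D: "D \<in> P" and m: "\<forall>w\<in>P. arc_le D w \<longrightarrow> w = D" and n0: "ne D \<noteq> 0"
  then obtain x y where x: "x \<in># D" and y: "y \<in># D" and gxy: "g x y \<noteq> 0"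
    unfolding ne_def by (auto simp: sum_mset_0_iff)
  then have c: "fst y < fst x" "snd x < snd y" by (auto simp: g_def split: if_splits)
  obtain s1 t2 where xx: "x = (s1, t2)" by (cases x)
  obtain s2 t1 where yy: "y = (s2, t1)" by (cases y)
  have ne: "x \<noteq> y" using c by auto
  obtain M where e: "D = add_mset x (add_mset y M)" using two_split[OF x y ne] by blast
  define D0 where "D0 = add_mset (s1,t1) (add_mset (s2,t2) M)"
  have vx: "valid_arc x" and vy: "valid_arc y" using P_valid D x y by auto
  have lt: "enat t1 < s2" using vy yy by (simp add: valid_arc_def)
  have sw: "swap D0 D" unfolding swap_def D0_def e xx yy using c lt xx yy
    by (intro exI[of _ s1] exI[of _ s2] exI[of _ t1] exI[of _ t2] exI[of _ M]) simp
  have vM: "\<forall>a\<in>#M. valid_arc a" using P_valid D e by auto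
  have "t2 < t1" "s2 < s1" "1 \<le> t1" "1 \<le> t2" using c vx vy xx yy by (auto simp: valid_arc_def)
  then have "\<forall>a\<in>#D0. valid_arc a" using vM lt unfolding D0_def
    by (auto simp: valid_arc_def) (metis enat_ord_simps(2) order.strict_trans)+
  moreover have "image_mset fst D0 = image_mset fst D" "image_mset snd D0 = image_mset snd D"
    using swap_images[OF sw] by auto
  ultimately have D0P: "D0 \<in> P" using char[OF D] by blast
  have "arc_le D D0" using swap_le sw .
  moreover have "ne D0 < ne D" using ne_strict D0P sw by blast
  ultimately show False using m D0P by fastforce
qed

end



lemma arc_le_trans: "arc_le x y \<Longrightarrow> arc_le y z \<Longrightarrow> arc_le x z"
  unfolding arc_le_def by (meson rtranclp_trans)

lemma arc_le_refl: "arc_le x x"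
  unfolding arc_le_def by simp

context setting begin

lemma KK_const: "D \<in> P \<Longrightarrow> p0 \<in> P \<Longrightarrow> KK D = KK p0"
  using images_eq KK_fst by blast

lemma chain_card:
  assumes p0: "p0 \<in> P" and sat: "saturated_chain_in P C"
  shows "card C = KK p0 + 1"
proof -
  define K where "K = KK p0"
  have CP: "C \<subseteq> P" and comp: "\<And>x y. x \<in> C \<Longrightarrow> y \<in> C \<Longrightarrow> arc_le x y \<or> arc_le y x"
    using sat by (auto simp: saturated_chain_in_def is_chain_in_def)
  have ext: "False" if w: "w \<in> P" "w \<notin> C" "\<forall>c\<in>C. arc_le c w \<or> arc_le w c" for w
  proof -
    have "is_chain_in P (insert w C)"
      unfolding is_chain_in_def
    proof (intro conjI ballI)
      show "insert w C \<subseteq> P" using w CP by blast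
      fix x y assume "x \<in> insert w C" "y \<in> insert w C"
      then show "arc_le x y \<or> arc_le y x" using w(3) comp arc_le_refl by auto
    qed
    moreover have "C \<subset> insert w C" using w by blast
    ultimately show False using sat unfolding saturated_chain_in_def by blast
  qed
  have neK: "ne D \<le> K" if "D \<in> P" for D
    using ne_le_KK[of D] KK_const[OF that p0] K_def by simp
  have Cne: "C \<noteq> {}"
  proof
    assume "C = {}"
    then show False using ext[of p0] p0 by blast
  qed
  have lt_le: "arc_le y x" if "x \<in> C" "y \<in> C" "ne x < ne y" for x y
  proof -
    have "\<not> (arc_le x y \<and> x \<noteq> y)" using rank_lt that CP by fastforce
    then show ?thesis using comp[OF that(1,2)] that(3) by auto
  qed
  have inj: "inj_on ne C"
  proof (rule inj_onI)
    fix x y assume "x \<in> C" "y \<in> C" "ne x = ne y"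
    then show "x = y"
    proof -
      assume h: "x \<in> C" "y \<in> C" "ne x = ne y"
      show "x = y"
      proof (rule ccontr)
        assume xy: "x \<noteq> y"
        have xP: "x \<in> P" and yP: "y \<in> P" using h CP by auto
        from comp[OF h(1,2)] show False
        proof
          assume "arc_le x y" then show False using rank_lt[OF xP yP _ xy] h by simp
        next
          assume "arc_le y x" then show False using rank_lt[OF yP xP] xy h by simp
        qed
      qed
    qed
  qed
  have sub: "ne ` C \<subseteq> {..K}" using neK CP by auto
  then have finC: "finite C" using inj finite_imageD finite_subset by blast
  define m where "m = Min (ne ` C)"
  have "m \<in> ne ` C" using finC Cne m_def by simp
  then obtain t where t: "t \<in> C" "ne t = m" by blast
  have tmin: "ne t \<le> ne c" if "c \<in> C" for c using finC that t m_def by simp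
  have "ne t = 0"
  proof (rule maximal_rank)
    show "t \<in> P" using t CP by blast
    show "\<forall>w\<in>P. arc_le t w \<longrightarrow> w = t"
    proof (intro ballI impI, rule ccontr)
      fix w assume w: "w \<in> P" "arc_le t w" "w \<noteq> t"
      have lw: "ne w < ne t" using rank_lt[OF _ w(1)] w t CP by blast
      then have "w \<notin> C" using tmin by force
      moreover have "\<forall>c\<in>C. arc_le c w \<or> arc_le w c"
      proof
        fix c assume c: "c \<in> C"
        show "arc_le c w \<or> arc_le w c"
        proof (cases "c = t")
          case True then show ?thesis using w by simp
        next
          case False
          then have "ne t \<noteq> ne c" using inj_onD[OF inj _ t(1) c] by blast
          then have "ne t < ne c" using tmin[OF c] by simp
          then have "arc_le c t" using lt_le t c by blast
          then show ?thesis using w arc_le_trans by blast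
        qed
      qed
      ultimately show False using ext w by blast
    qed
  qed
  define M where "M = Max (ne ` C)"
  have "M \<in> ne ` C" using finC Cne M_def by simp
  then obtain b where b: "b \<in> C" "ne b = M" by blast
  have bmax: "ne c \<le> ne b" if "c \<in> C" for c using finC that b M_def by simp
  have "ne b = K"
  proof -
    have "ne b = KK b"
    proof (rule minimal_rank)
      show "b \<in> P" using b CP by blast
      show "\<forall>w\<in>P. arc_le w b \<longrightarrow> w = b"
      proof (intro ballI impI, rule ccontr)
        fix w assume w: "w \<in> P" "arc_le w b" "w \<noteq> b"
        have lw: "ne b < ne w" using rank_lt[OF w(1)] w b CP by blast
        then have "w \<notin> C" using bmax by force
        moreover have "\<forall>c\<in>C. arc_le c w \<or> arc_le w c"
        proof
          fix c assume c: "c \<in> C"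
          show "arc_le c w \<or> arc_le w c"
          proof (cases "c = b")
            case True then show ?thesis using w by simp
          next
            case False
            then have "ne c \<noteq> ne b" using inj_onD[OF inj _ c b(1)] by blast
            then have "ne c < ne b" using bmax[OF c] by simp
            then have "arc_le b c" using lt_le b c by blast
            then show ?thesis using w arc_le_trans by blast
          qed
        qed
        ultimately show False using ext w by blast
      qed
    qed
    moreover have "KK b = K" using KK_const[of b] b(1) CP p0 unfolding K_def by blast
    ultimately show ?thesis by simp
  qed
  have step: "Suc k \<in> ne ` C" if k: "k \<in> ne ` C" "k < K" for k
  proof -
    obtain c where c: "c \<in> C" "ne c = k" using k by blast
    define A where "A = {d \<in> C. k < ne d}"
    have "b \<in> A" using b \<open>ne b = K\<close> k A_def by simp
    then have Ane: "A \<noteq> {}" by blast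
    have finA: "finite A" using finC A_def by simp
    define m2 where "m2 = Min (ne ` A)"
    have "m2 \<in> ne ` A" using finA Ane m2_def by simp
    then obtain d where d: "d \<in> A" "ne d = m2" by blast
    have dmin: "ne d \<le> ne e" if "e \<in> A" for e using finA that d m2_def by simp
    have dC: "d \<in> C" and kd: "k < ne d" using d A_def by auto
    show ?thesis
    proof (rule ccontr)
      assume nk: "Suc k \<notin> ne ` C"
      have "ne d \<noteq> Suc k" using nk dC by force
      then have r2: "ne c + 2 \<le> ne d" using kd c by simp
      have ldc: "arc_le d c" using lt_le c dC kd by simp
      obtain w where w: "w \<in> P" "arc_le d w" "arc_le w c" "ne c < ne w" "ne w < ne d"
        using between[OF _ _ ldc r2] dC c CP by blast
      have "w \<notin> C"
      proof
        assume "w \<in> C"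
        then have "w \<in> A" using w c A_def by simp
        then show False using dmin w by force
      qed
      moreover have "\<forall>e\<in>C. arc_le e w \<or> arc_le w e"
      proof
        fix e assume e: "e \<in> C"
        show "arc_le e w \<or> arc_le w e"
        proof (cases "k < ne e")
          case True
          then have "e \<in> A" using e A_def by simp
          then have "ne d \<le> ne e" using dmin by blast
          have "arc_le e d"
          proof (cases "e = d")
            case True then show ?thesis using arc_le_refl by simp
          next
            case False
            then have "ne e \<noteq> ne d" using inj_onD[OF inj _ e dC] by blast
            then show ?thesis using lt_le[OF dC e] \<open>ne d \<le> ne e\<close> by simp
          qed
          then show ?thesis using w arc_le_trans by blast
        next
          case False
          then have "ne e \<le> ne c" using c by simp
          have "arc_le c e"
          proof (cases "e = c")
            case True then show ?thesis using arc_le_refl by simp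
          next
            case False
            then have "ne e \<noteq> ne c" using inj_onD[OF inj _ e c(1)] by blast
            then show ?thesis using lt_le[OF e c(1)] \<open>ne e \<le> ne c\<close> by simp
          qed
          then show ?thesis using w arc_le_trans by blast
        qed
      qed
      ultimately show False using ext w by blast
    qed
  qed
  have all: "k \<in> ne ` C" if "k \<le> K" for k
    using that
  proof (induction k)
    case 0 show ?case using t(1) \<open>ne t = 0\<close> by (metis image_eqI)
  next
    case (Suc k)
    then have kK: "k < K" by simp
    then have "k \<in> ne ` C" using Suc.IH by simp
    then show ?case using step kK by blast
  qed
  have "ne ` C = {..K}"
  proof
    show "ne ` C \<subseteq> {..K}" using sub .
    show "{..K} \<subseteq> ne ` C" using all by blast
  qed
  then have "card (ne ` C) = K + 1" by simp
  moreover have "card (ne ` C) = card C" using card_image[OF inj] .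
  ultimately show ?thesis unfolding K_def by simp
qed

end

theorem mainTheorem7:
  fixes \<alpha> \<beta> \<gamma> :: "nat list" and T :: "nat \<times> nat \<Rightarrow> nat"
  assumes "is_partition \<alpha>" and "is_partition \<beta>" and "is_partition \<gamma>"
    and "part \<alpha> 1 \<le> 2"
    and "LR_tableau \<alpha> \<beta> \<gamma> T"
    and "num_entries \<beta> \<gamma> T 2 = num_entries \<beta> \<gamma> T 1
         \<or> num_entries \<beta> \<gamma> T 2 + 1 = num_entries \<beta> \<gamma> T 1"
    and "\<forall>i\<ge>1. card (row_boxes \<beta> \<gamma> i) \<le> 1"
    and "\<forall>i j. 1 \<le> i \<longrightarrow> 1 \<le> j \<longrightarrow> entries_in_row \<beta> \<gamma> T 2 j > 0
           \<longrightarrow> entries_in_row \<beta> \<gamma> T 1 i > 0 \<longrightarrow> j > i"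
  shows "\<forall>C1 C2. saturated_chain_in (D_Gamma \<alpha> \<beta> \<gamma> T) C1
            \<longrightarrow> saturated_chain_in (D_Gamma \<alpha> \<beta> \<gamma> T) C2
            \<longrightarrow> chain_length C1 = chain_length C2"
proof -
  interpret setting \<alpha> \<beta> \<gamma> T using assms(5-8) by unfold_locales
  show ?thesis
  proof (intro allI impI)
    fix C1 C2
    assume s1: "saturated_chain_in (D_Gamma \<alpha> \<beta> \<gamma> T) C1"
      and s2: "saturated_chain_in (D_Gamma \<alpha> \<beta> \<gamma> T) C2"
    show "chain_length C1 = chain_length C2"
    proof (cases "D_Gamma \<alpha> \<beta> \<gamma> T = {}")
      case True
      then have "C1 = {}" "C2 = {}" using s1 s2
        by (auto simp: saturated_chain_in_def is_chain_in_def)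
      then show ?thesis by simp
    next
      case False
      then obtain p0 where p0: "p0 \<in> D_Gamma \<alpha> \<beta> \<gamma> T" by blast
      show ?thesis using chain_card[OF p0 s1] chain_card[OF p0 s2]
        by (simp add: chain_length_def)
    qed
  qed
qed

end
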